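(* Let $q$ be an odd prime power, $f$ a planar function on $\mathbb F_{q^2}$, and $\theta\in\mathbb F_{q^2}^*$ such that for every $c\in\mathbb F_q$, $\#\{x\in\mathbb F_{q^2}:\theta_1f_0(x)-\theta_0f_1(x)=c\}$ equals $q+1$ if $c\neq0$ and $1$ if $c=0$. Then the unital $\mathcal U_\theta:=\{(x,t\theta):x\in\mathbb F_{q^2},t\in\mathbb F_q\}\cup\{(\infty)\}$ of order $q$ in $\Pi(f)$ is self-dual.
   Context: A function $f:\mathbb F_{q^2}\to\mathbb F_{q^2}$ is planar if for every $a\neq0$ the map $x\mapsto f(x+a)-f(x)$ is a bijection. For planar $f$, $\Pi(f)$ is the projective plane with points $(x,y)\in\mathbb F_{q^2}^2$ and $(a)$ for $a\in\mathbb F_{q^2}\cup\{\infty\}$, and lines $L_{a,b}=\{(x,f(x+a)-b):x\in\mathbb F_{q^2}\}\cup\{(a)\}$, $N_a=\{(a,y):y\in\mathbb F_{q^2}\}\cup\{(\infty)\}$ ($a,b\in\mathbb F_{q^2}$), $L_\infty=\{(a):a\in\mathbb F_{q^2}\cup\{\infty\}\}$, incidence being membership. A fixed $\xi\in\mathbb F_{q^2}\setminus\mathbb F_q$ is chosen; $\theta=\theta_0+\theta_1\xi$ and $f(x)=f_0(x)+f_1(x)\xi$ with $\theta_i,f_i(x)\in\mathbb F_q$. A unital $\mathcal U$ embedded in a projective plane $\Pi$ of order $q^2$ (a set of $q^3+1$ points meeting each line in $1$ or $q+1$ points) is viewed as the $2$-$(q^3+1,q+1,1)$ design whose blocks are the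 intersections with lines meeting it in $q+1$ points. Its dual unital $\mathcal U^*$ is the design whose points are the tangent lines of $\mathcal U$ (lines meeting it in exactly one point) and whose blocks correspond to the points of $\Pi$ not in $\mathcal U$, a tangent line being incident with such a point if it contains it. $\mathcal U$ is self-dual if $\mathcal U$ and $\mathcal U^*$ are isomorphic as designs. *)

theory Defs
  imports "HOL-Computational_Algebra.Primes" "HOL-Library.Cardinality"
begin

text \<open>Finite field F_{q^2} is modelled by a finite field type 'a with CARD('a) = q^2;
  the subfield F_q is the set of elements fixed by x \<mapsto> x^q.\<close>

definition Fq :: "nat \<Rightarrow> 'a::field set" where
  "Fq q = {x. x ^ q = x}"

definition comp0 :: "nat \<Rightarrow> 'a::field \<Rightarrow> 'a \<Rightarrow> 'a" where
  "comp0 q xi z = (THE a. a \<in> Fq q \<and> (\<exists>b \<in> Fq q. z = a + b * xi))"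

definition comp1 :: "nat \<Rightarrow> 'a::field \<Rightarrow> 'a \<Rightarrow> 'a" where
  "comp1 q xi z = (THE b. b \<in> Fq q \<and> (\<exists>a \<in> Fq q. z = a + b * xi))"

definition planar :: "('a::field \<Rightarrow> 'a) \<Rightarrow> bool" where
  "planar f \<longleftrightarrow> (\<forall>a. a \<noteq> 0 \<longrightarrow> bij (\<lambda>x. f (x + a) - f x))"

datatype 'a point = Aff 'a 'a | Dir 'a | Inf

datatype 'a line = L 'a 'a | N 'a | Linf

fun inc :: "('a::field \<Rightarrow> 'a) \<Rightarrow> 'a point \<Rightarrow> 'a line \<Rightarrow> bool" where
  "inc f (Aff x y) (L a b) = (y = f (x + a) - b)"
| "inc f (Dir c) (L a b) = (c = a)"
| "inc f Inf (L a b) = False"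
| "inc f (Aff x y) (N a) = (x = a)"
| "inc f (Dir c) (N a) = False"
| "inc f Inf (N a) = True"
| "inc f (Aff x y) Linf = False"
| "inc f (Dir c) Linf = True"
| "inc f Inf Linf = True"

definition U_theta :: "nat \<Rightarrow> 'a::field \<Rightarrow> 'a point set" where
  "U_theta q \<theta> = {Aff x (t * \<theta>) | x t. t \<in> Fq q} \<union> {Inf}"

definition is_unital :: "('a::field \<Rightarrow> 'a) \<Rightarrow> nat \<Rightarrow> 'a point set \<Rightarrow> bool" where
  "is_unital f q U \<longleftrightarrow> card U = q ^ 3 + 1 \<and>
     (\<forall>l. card {P \<in> U. inc f P l} = 1 \<or> card {P \<in> U. inc f P l} = q + 1)"

definition secant_lines :: "('a::field \<Rightarrow> 'a) \<Rightarrow> nat \<Rightarrow> 'a point set \<Rightarrow> 'a line set" where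
  "secant_lines f q U = {l. card {P \<in> U. inc f P l} = q + 1}"

definition tangent_lines :: "('a::field \<Rightarrow> 'a) \<Rightarrow> 'a point set \<Rightarrow> 'a line set" where
  "tangent_lines f U = {l. card {P \<in> U. inc f P l} = 1}"

definition design_iso ::
  "'p set \<Rightarrow> 'b set \<Rightarrow> ('p \<Rightarrow> 'b \<Rightarrow> bool) \<Rightarrow> 'p2 set \<Rightarrow> 'b2 set \<Rightarrow> ('p2 \<Rightarrow> 'b2 \<Rightarrow> bool) \<Rightarrow> bool" where
  "design_iso P B I P' B' I' \<longleftrightarrow>
     (\<exists>\<alpha> \<beta>. bij_betw \<alpha> P P' \<and> bij_betw \<beta> B B' \<and>
        (\<forall>p\<in>P. \<forall>b\<in>B. I p b \<longleftrightarrow> I' (\<alpha> p) (\<beta> b)))"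

text \<open>Self-duality: the design (U, secant lines, incidence) is isomorphic to the dual
  design (tangent lines, points off U, "tangent line contains point").\<close>
definition self_dual_unital :: "('a::field \<Rightarrow> 'a) \<Rightarrow> nat \<Rightarrow> 'a point set \<Rightarrow> bool" where
  "self_dual_unital f q U \<longleftrightarrow>
     design_iso U (secant_lines f q U) (inc f)
                (tangent_lines f U) (- U) (\<lambda>l P. inc f P l)"

end

theory Submission
  imports Defs "HOL-Number_Theory.Residues" "HOL-Computational_Algebra.Polynomial"
begin

context
  fixes q :: nat and \<xi> :: "'a::{field,finite}"
  assumes qpp: "\<exists>p k. prime p \<and> k > 0 \<and> q = p ^ k"
    and cardF: "CARD('a) = q ^ 2"
    and xiK: "\<xi> \<notin> Fq q"
begin

lemma char_q: "prime CHAR('a) \<and> (\<exists>k. q = CHAR('a) ^ k)"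
proof -
  obtain p k where p: "prime p" "k > 0" "q = p ^ k" using qpp by blast
  have pos: "CHAR('a) > 0" by (rule finite_imp_CHAR_pos) simp
  have pr: "prime CHAR('a)" by (rule prime_CHAR_semidom[OF pos])
  have "CHAR('a) dvd p ^ (2*k)" using CHAR_dvd_CARD[where 'a='a] cardF p
    by (simp add: power_mult mult.commute)
  hence "CHAR('a) dvd p" using pr prime_dvd_power by blast
  hence "CHAR('a) = p" using pr p(1) by (simp add: primes_dvd_imp_eq)
  thus ?thesis using pr p by blast
qed

lemma q_ge2: "q \<ge> 2"
proof -
  obtain p k where p: "prime p" "k > 0" "q = p ^ k" using qpp by blast
  have "p \<ge> 2" using p(1) prime_ge_2_nat by blast
  have "p ^ 1 \<le> p ^ k" using p(2) \<open>p \<ge> 2\<close> by (intro power_increasing) auto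
  thus ?thesis using p \<open>p \<ge> 2\<close> by simp
qed

lemma frob_add: "(x + y :: 'a) ^ q = x ^ q + y ^ q"
proof -
  obtain k where "q = CHAR('a) ^ k" using char_q by blast
  thus ?thesis using char_q freshmans_dream' by blast
qed

lemma frob_minus: "(- x :: 'a) ^ q = - (x ^ q)"
proof -
  have "x ^ q + (-x) ^ q = 0" using frob_add[of x "-x"] q_ge2 by (simp add: power_0_left)
  thus ?thesis by (simp add: eq_neg_iff_add_eq_0 add.commute)
qed

lemma pow_card: "(x :: 'a) ^ (q^2) = x"
proof (cases "x = 0")
  case False
  have "x * (\<Prod>y\<in>UNIV-{0}. x * y) = x * x ^ (card (UNIV :: 'a set) - 1) * \<Prod>(UNIV-{0})"
    by (simp add: prod.distrib mult_ac)
  also have "x * x ^ (card (UNIV :: 'a set) - 1) = x ^ Suc (card (UNIV :: 'a set) - 1)"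
    by (subst power_Suc) auto
  also have "Suc (card (UNIV :: 'a set) - 1) = card (UNIV :: 'a set)"
    using finite_UNIV_card_ge_0[where ?'a = 'a] by simp
  also have "(\<Prod>y\<in>UNIV-{0}. x * y) = (\<Prod>y\<in>UNIV-{0}. y)"
    by (rule prod.reindex_bij_witness[of _ "\<lambda>y. y / x" "\<lambda>y. x * y"]) (use False in auto)
  finally show ?thesis using cardF
    by simp
qed (use q_ge2 in auto)

lemma K_add: "(a::'a) \<in> Fq q \<Longrightarrow> b \<in> Fq q \<Longrightarrow> a + b \<in> Fq q"
  by (simp add: Fq_def frob_add)
lemma K_minus: "(a::'a) \<in> Fq q \<Longrightarrow> - a \<in> Fq q"
  by (simp add: Fq_def frob_minus)
lemma K_diff: "(a::'a) \<in> Fq q \<Longrightarrow> b \<in> Fq q \<Longrightarrow> a - b \<in> Fq q"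
  using K_add K_minus by (metis diff_conv_add_uminus)
lemma K_mult: "(a::'a) \<in> Fq q \<Longrightarrow> b \<in> Fq q \<Longrightarrow> a * b \<in> Fq q"
  by (simp add: Fq_def power_mult_distrib)
lemma K_div: "(a::'a) \<in> Fq q \<Longrightarrow> b \<in> Fq q \<Longrightarrow> a / b \<in> Fq q"
  by (simp add: Fq_def power_divide)
lemma K_0: "(0::'a) \<in> Fq q" using q_ge2 by (simp add: Fq_def)
lemma K_1: "(1::'a) \<in> Fq q" by (simp add: Fq_def)

lemma card_K_ge: "q \<le> card (Fq q :: 'a set)"
proof -
  define T where "T = (\<lambda>x::'a. x + x ^ q)"
  have TK: "T x \<in> Fq q" for x
  proof -
    have "(x ^ q) ^ q = x" using pow_card[of x] by (simp add: power_mult[symmetric] power2_eq_square)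
    thus ?thesis by (simp add: T_def Fq_def frob_add add.commute)
  qed
  have fib: "card {x. T x = c} \<le> q" for c
  proof -
    define P where "P = monom (1::'a) q + [:-c, 1:]"
    have dP: "degree P = q" unfolding P_def using q_ge2
      by (subst degree_add_eq_left) (auto simp: degree_monom_eq)
    hence "P \<noteq> 0" using q_ge2 by auto
    moreover have "{x. T x = c} = {x. poly P x = 0}"
      by (auto simp: P_def T_def poly_monom algebra_simps)
    ultimately show ?thesis using card_poly_roots_bound[of P] dP by simp
  qed
  have "UNIV = (\<Union>c\<in>Fq q. {x. T x = c})" using TK by auto
  hence "q^2 = card (\<Union>c\<in>Fq q. {x. T x = c})" using cardF by simp
  also have "\<dots> \<le> (\<Sum>c\<in>Fq q. card {x. T x = c})" by (rule card_UN_le) simp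
  also have "\<dots> \<le> card (Fq q :: 'a set) * q" using fib sum_bounded_above[of "Fq q" "\<lambda>c. card {x. T x = c}" q] by simp
  finally have "q * q \<le> card (Fq q :: 'a set) * q" by (simp add: power2_eq_square)
  thus ?thesis using q_ge2 by simp
qed

lemma decomp_uniq:
  assumes "(a::'a) \<in> Fq q" "b \<in> Fq q" "a' \<in> Fq q" "b' \<in> Fq q" "a + b * \<xi> = a' + b' * \<xi>"
  shows "a = a' \<and> b = b'"
proof (cases "b = b'")
  case True thus ?thesis using assms by simp
next
  case False
  have "\<xi> * (b - b') = a' - a" using assms(5) by (simp add: algebra_simps)
  hence "\<xi> = (a' - a) / (b - b')" using False by (simp add: field_simps)
  hence "\<xi> \<in> Fq q" using assms by (simp add: K_div K_diff)
  thus ?thesis using xiK by blast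
qed

lemma card_K_and_surj:
  "card (Fq q :: 'a set) = q \<and> (\<forall>z::'a. \<exists>a\<in>Fq q. \<exists>b\<in>Fq q. z = a + b * \<xi>)"
proof -
  define h where "h = (\<lambda>(a,b). a + b * \<xi>)"
  have inj: "inj_on h (Fq q \<times> Fq q)"
    unfolding inj_on_def h_def using decomp_uniq by auto
  have fin: "finite (Fq q :: 'a set)" by simp
  have "card (h ` (Fq q \<times> Fq q)) = card (Fq q :: 'a set) * card (Fq q :: 'a set)"
    using card_image[OF inj] by (simp add: card_cartesian_product)
  moreover have "card (h ` (Fq q \<times> Fq q)) \<le> q * q"
    using card_mono[of UNIV "h ` (Fq q \<times> Fq q)"] cardF by (simp add: power2_eq_square)
  moreover have "q * q \<le> card (Fq q :: 'a set) * card (Fq q :: 'a set)"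
    using card_K_ge by (simp add: mult_le_mono)
  ultimately have c: "card (Fq q :: 'a set) = q"
    using card_K_ge power2_le_imp_le[of "card (Fq q :: 'a set)" q] by (simp add: power2_eq_square)
  have "card (h ` (Fq q \<times> Fq q)) = card (UNIV::'a set)"
    using card_image[OF inj] c cardF by (simp add: card_cartesian_product power2_eq_square)
  hence "h ` (Fq q \<times> Fq q) = UNIV" by (simp add: card_subset_eq)
  have "\<exists>a\<in>Fq q. \<exists>b\<in>Fq q. z = a + b * \<xi>" for z :: 'a
  proof -
    have "z \<in> h ` (Fq q \<times> Fq q)" using \<open>h ` (Fq q \<times> Fq q) = UNIV\<close> by simp
    then obtain ab where "ab \<in> Fq q \<times> Fq q" "z = h ab" by blast
    thus ?thesis unfolding h_def by (cases ab) auto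
  qed
  hence "\<forall>z::'a. \<exists>a\<in>Fq q. \<exists>b\<in>Fq q. z = a + b * \<xi>" by blast
  with c show ?thesis by blast
qed

lemma comp_eq:
  assumes "(a::'a) \<in> Fq q" "b \<in> Fq q" "z = a + b * \<xi>"
  shows "comp0 q \<xi> z = a \<and> comp1 q \<xi> z = b"
proof
  show "comp0 q \<xi> z = a" unfolding comp0_def
  proof (rule the_equality)
    show "a \<in> Fq q \<and> (\<exists>b\<in>Fq q. z = a + b * \<xi>)" using assms by blast
    fix x assume "x \<in> Fq q \<and> (\<exists>b\<in>Fq q. z = x + b * \<xi>)"
    then obtain b' where "x \<in> Fq q" "b' \<in> Fq q" "z = x + b' * \<xi>" by blast
    hence "x + b' * \<xi> = a + b * \<xi>" using assms(3) by argo
    thus "x = a" using decomp_uniq[of x b' a b] assms(1,2) \<open>x \<in> Fq q\<close> \<open>b' \<in> Fq q\<close> by blast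
  qed
  show "comp1 q \<xi> z = b" unfolding comp1_def
  proof (rule the_equality)
    show "b \<in> Fq q \<and> (\<exists>a\<in>Fq q. z = a + b * \<xi>)" using assms by blast
    fix x assume "x \<in> Fq q \<and> (\<exists>a\<in>Fq q. z = a + x * \<xi>)"
    then obtain a' where "x \<in> Fq q" "a' \<in> Fq q" "z = a' + x * \<xi>" by blast
    hence "a' + x * \<xi> = a + b * \<xi>" using assms(3) by argo
    thus "x = b" using decomp_uniq[of a' x a b] assms(1,2) \<open>x \<in> Fq q\<close> \<open>a' \<in> Fq q\<close> by blast
  qed
qed

lemma comp_props:
  "comp0 q \<xi> z \<in> Fq q \<and> comp1 q \<xi> z \<in> Fq q \<and> (z::'a) = comp0 q \<xi> z + comp1 q \<xi> z * \<xi>"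
proof -
  obtain a b where ab: "a \<in> Fq q" "b \<in> Fq q" "z = a + b * \<xi>" using card_K_and_surj by blast
  have "comp0 q \<xi> z = a" "comp1 q \<xi> z = b" using comp_eq[OF ab] by auto
  thus ?thesis using ab by metis
qed

lemma comp_diff:
  "comp0 q \<xi> (z - w) = comp0 q \<xi> z - comp0 q \<xi> (w::'a) \<and>
   comp1 q \<xi> (z - w) = comp1 q \<xi> z - comp1 q \<xi> (w::'a)"
proof -
  define z0 where "z0 = comp0 q \<xi> z"
  define z1 where "z1 = comp1 q \<xi> z"
  define w0 where "w0 = comp0 q \<xi> w"
  define w1 where "w1 = comp1 q \<xi> w"
  have ez: "z = z0 + z1 * \<xi>" and ew: "w = w0 + w1 * \<xi>"
    using comp_props[of z] comp_props[of w] by (auto simp: z0_def z1_def w0_def w1_def)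
  have "z - w = (comp0 q \<xi> z - comp0 q \<xi> w) + (comp1 q \<xi> z - comp1 q \<xi> w) * \<xi>"
    unfolding z0_def[symmetric] z1_def[symmetric] w0_def[symmetric] w1_def[symmetric]
    by (subst ez, subst ew) (simp add: algebra_simps)
  moreover have "comp0 q \<xi> z - comp0 q \<xi> w \<in> Fq q" "comp1 q \<xi> z - comp1 q \<xi> w \<in> Fq q"
    using comp_props[of z] comp_props[of w] K_diff by blast+
  ultimately show ?thesis using comp_eq by blast
qed

definition GG :: "'a \<Rightarrow> 'a \<Rightarrow> 'a" where
  "GG \<theta> w = comp1 q \<xi> \<theta> * comp0 q \<xi> w - comp0 q \<xi> \<theta> * comp1 q \<xi> w"

lemma GG_K: "GG \<theta> w \<in> Fq q"
  unfolding GG_def using comp_props[of \<theta>] comp_props[of w] by (intro K_mult K_diff) auto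

lemma GG_diff: "GG \<theta> (z - w) = GG \<theta> z - GG \<theta> w"
proof -
  have e: "comp0 q \<xi> (z - w) = comp0 q \<xi> z - comp0 q \<xi> w" "comp1 q \<xi> (z - w) = comp1 q \<xi> z - comp1 q \<xi> w"
    using comp_diff[of z w] by auto
  show ?thesis unfolding GG_def e by (simp add: algebra_simps)
qed

lemma GG_zero:
  assumes "\<theta> \<noteq> 0"
  shows "w / \<theta> \<in> Fq q \<longleftrightarrow> GG \<theta> w = 0"
proof -
  define t0 where "t0 = comp0 q \<xi> \<theta>"
  define t1 where "t1 = comp1 q \<xi> \<theta>"
  define w0 where "w0 = comp0 q \<xi> w"
  define w1 where "w1 = comp1 q \<xi> w"
  have th: "t0 \<in> Fq q" "t1 \<in> Fq q" "\<theta> = t0 + t1 * \<xi>" using comp_props[of \<theta>] unfolding t0_def[symmetric] t1_def[symmetric] by auto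
  have ww: "w0 \<in> Fq q" "w1 \<in> Fq q" "w = w0 + w1 * \<xi>" using comp_props[of w] unfolding w0_def[symmetric] w1_def[symmetric] by auto
  have G: "GG \<theta> w = t1 * w0 - t0 * w1" by (simp add: GG_def t0_def t1_def w0_def w1_def)
  show ?thesis
  proof
    assume t: "w / \<theta> \<in> Fq q"
    define t where "t = w / \<theta>"
    have "w = t * \<theta>" using assms by (simp add: t_def)
    also have "\<dots> = t * t0 + (t * t1) * \<xi>" by (subst th(3)) (simp add: algebra_simps)
    finally have "w = t * t0 + (t * t1) * \<xi>" .
    moreover have tK: "t \<in> Fq q" using t unfolding t_def .
    ultimately have "comp0 q \<xi> w = t * t0 \<and> comp1 q \<xi> w = t * t1"
      using th(1,2) by (intro comp_eq K_mult) auto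
    hence "w0 = t * t0 \<and> w1 = t * t1" unfolding w0_def w1_def .
    thus "GG \<theta> w = 0" using G by (simp add: algebra_simps)
  next
    assume "GG \<theta> w = 0"
    hence e: "t1 * w0 = t0 * w1" using G by simp
    show "w / \<theta> \<in> Fq q"
    proof (cases "t0 = 0")
      case False
      define t where "t = w0 / t0"
      have "w1 = t * t1" using e False by (simp add: t_def field_simps)
      have "w = w0 + w1 * \<xi>" by (rule ww(3))
      also have "\<dots> = t * t0 + t * t1 * \<xi>" using \<open>w1 = t * t1\<close> False by (simp add: t_def)
      also have "\<dots> = t * \<theta>" by (subst th(3)) (simp add: algebra_simps)
      finally have "w = t * \<theta>" .
      hence "w / \<theta> = t" using assms by simp
      moreover have "t \<in> Fq q" unfolding t_def using K_div ww th by blast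
      ultimately show ?thesis by simp
    next
      case True
      hence "t1 \<noteq> 0" using th assms by auto
      hence "w0 = 0" using e True by simp
      define t where "t = w1 / t1"
      have "w = w0 + w1 * \<xi>" by (rule ww(3))
      also have "\<dots> = t * t1 * \<xi>" using \<open>t1 \<noteq> 0\<close> \<open>w0 = 0\<close> by (simp add: t_def)
      also have "\<dots> = t * \<theta>" using True by (subst th(3)) (simp add: algebra_simps)
      finally have "w = t * \<theta>" .
      hence "w / \<theta> = t" using assms by simp
      moreover have "t \<in> Fq q" unfolding t_def using K_div ww th by blast
      ultimately show ?thesis by simp
    qed
  qed
qed

lemma card_K: "card (Fq q :: 'a set) = q" using card_K_and_surj by blast

lemma memU:
  assumes "(\<theta>::'a) \<noteq> 0"
  shows "Aff x y \<in> U_theta q \<theta> \<longleftrightarrow> y / \<theta> \<in> Fq q"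
    "point.Inf \<in> U_theta q \<theta>" "Dir c \<notin> U_theta q \<theta>"
proof -
  show "Aff x y \<in> U_theta q \<theta> \<longleftrightarrow> y / \<theta> \<in> Fq q"
  proof
    assume "Aff x y \<in> U_theta q \<theta>"
    then obtain t where "t \<in> Fq q" "y = t * \<theta>" by (auto simp: U_theta_def)
    thus "y / \<theta> \<in> Fq q" using assms by simp
  next
    assume "y / \<theta> \<in> Fq q"
    moreover have "y = (y / \<theta>) * \<theta>" using assms by simp
    ultimately show "Aff x y \<in> U_theta q \<theta>" unfolding U_theta_def by blast
  qed
qed (auto simp: U_theta_def)

lemma cardU:
  assumes "(\<theta>::'a) \<noteq> 0"
  shows "card (U_theta q \<theta>) = q ^ 3 + 1"
proof -
  have e: "U_theta q \<theta> = insert point.Inf ((\<lambda>(x,t). Aff x (t*\<theta>)) ` (UNIV \<times> Fq q))"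
    unfolding U_theta_def by auto
  have inj: "inj_on (\<lambda>(x,t). Aff x (t*\<theta>)) (UNIV \<times> Fq q)"
    using assms by (auto simp: inj_on_def)
  have "card ((\<lambda>(x,t). Aff x (t*\<theta>)) ` (UNIV \<times> Fq q)) = q^2 * q"
    using card_image[OF inj] cardF card_K by (simp add: card_cartesian_product)
  moreover have "point.Inf \<notin> (\<lambda>(x,t). Aff x (t*\<theta>)) ` (UNIV \<times> Fq q)" by auto
  moreover have "finite ((\<lambda>(x,t). Aff x (t*\<theta>)) ` (UNIV \<times> Fq q))" by simp
  ultimately show ?thesis unfolding e by (simp add: power3_eq_cube power2_eq_square)
qed

lemma cntN:
  assumes "(\<theta>::'a) \<noteq> 0"
  shows "card {P \<in> U_theta q \<theta>. inc f P (N a)} = q + 1"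
proof -
  have e: "{P \<in> U_theta q \<theta>. inc f P (N a)} = insert point.Inf ((\<lambda>t. Aff a (t*\<theta>)) ` Fq q)"
  proof (rule Set.set_eqI)
    fix P show "P \<in> {P \<in> U_theta q \<theta>. inc f P (N a)} \<longleftrightarrow> P \<in> insert point.Inf ((\<lambda>t. Aff a (t*\<theta>)) ` Fq q)"
    proof (cases P)
      case (Aff x y)
      have "y / \<theta> \<in> Fq q \<longleftrightarrow> (\<exists>t\<in>Fq q. y = t * \<theta>)"
        using assms by (metis nonzero_eq_divide_eq mult.commute)
      thus ?thesis using Aff memU[OF assms] by auto
    qed (use memU[OF assms] in auto)
  qed
  have inj: "inj_on (\<lambda>t. Aff a (t*\<theta>)) (Fq q)" using assms by (auto simp: inj_on_def)
  show ?thesis unfolding e using card_image[OF inj] card_K by (subst card_insert_disjoint) auto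
qed

lemma cntLinf:
  assumes "(\<theta>::'a) \<noteq> 0"
  shows "card {P \<in> U_theta q \<theta>. inc f P Linf} = 1"
proof -
  have "{P \<in> U_theta q \<theta>. inc f P Linf} = {point.Inf}"
  proof (rule Set.set_eqI)
    fix P show "P \<in> {P \<in> U_theta q \<theta>. inc f P Linf} \<longleftrightarrow> P \<in> {point.Inf}"
      by (cases P) (use memU[OF assms] in auto)
  qed
  thus ?thesis by simp
qed

lemma cntL:
  assumes "(\<theta>::'a) \<noteq> 0"
    and hyp: "\<forall>c\<in>Fq q. card {x. GG \<theta> (f x) = c} = (if c \<noteq> 0 then q+1 else 1)"
  shows "card {P \<in> U_theta q \<theta>. inc f P (L a b)} = (if b / \<theta> \<in> Fq q then 1 else q + 1)"
proof -
  have e: "{P \<in> U_theta q \<theta>. inc f P (L a b)} = (\<lambda>x. Aff x (f (x+a) - b)) ` {x. GG \<theta> (f (x+a)) = GG \<theta> b}"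
  proof (rule Set.set_eqI)
    fix P show "P \<in> {P \<in> U_theta q \<theta>. inc f P (L a b)} \<longleftrightarrow> P \<in> (\<lambda>x. Aff x (f (x+a) - b)) ` {x. GG \<theta> (f (x+a)) = GG \<theta> b}"
    proof (cases P)
      case (Aff x y)
      have "(f (x+a) - b) / \<theta> \<in> Fq q \<longleftrightarrow> GG \<theta> (f (x+a)) = GG \<theta> b"
        using GG_zero[OF assms(1)] GG_diff by simp
      thus ?thesis using Aff memU(1)[OF assms(1)] by auto
    qed (use memU[OF assms(1)] in auto)
  qed
  have inj: "inj_on (\<lambda>x. Aff x (f (x+a) - b)) S" for S by (auto simp: inj_on_def)
  have e2: "(\<lambda>x. x + a) ` {x. GG \<theta> (f (x+a)) = GG \<theta> b} = {y. GG \<theta> (f y) = GG \<theta> b}"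
  proof (rule Set.set_eqI)
    fix y show "y \<in> (\<lambda>x. x + a) ` {x. GG \<theta> (f (x+a)) = GG \<theta> b} \<longleftrightarrow> y \<in> {y. GG \<theta> (f y) = GG \<theta> b}"
      by (auto simp: image_iff intro: exI[of _ "y - a"])
  qed
  have inj2: "inj_on (\<lambda>x. x + a) S" for S :: "'a set" by (auto simp: inj_on_def)
  have "card {P \<in> U_theta q \<theta>. inc f P (L a b)} = card {y. GG \<theta> (f y) = GG \<theta> b}"
    unfolding e card_image[OF inj] e2[symmetric] card_image[OF inj2] ..
  also have "\<dots> = (if GG \<theta> b \<noteq> 0 then q+1 else 1)" using hyp GG_K by blast
  also have "\<dots> = (if b / \<theta> \<in> Fq q then 1 else q + 1)" using GG_zero[OF assms(1), of b] by auto
  finally show ?thesis .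
qed

lemma main:
  assumes theta_nz: "(\<theta>::'a) \<noteq> 0"
    and hyp0: "\<forall>c \<in> Fq q.
      card {x. comp1 q \<xi> \<theta> * comp0 q \<xi> (f x) - comp0 q \<xi> \<theta> * comp1 q \<xi> (f x) = c}
        = (if c \<noteq> 0 then q + 1 else 1)"
  shows "is_unital f q (U_theta q \<theta>) \<and> self_dual_unital f q (U_theta q \<theta>)"
proof -
  have hyp: "\<forall>c\<in>Fq q. card {x. GG \<theta> (f x) = c} = (if c \<noteq> 0 then q+1 else 1)"
    using hyp0 unfolding GG_def .
  define U where "U = U_theta q \<theta>"
  define cnt where "cnt l = card {P \<in> U. inc f P l}" for l
  have cN: "cnt (N a) = q + 1" for a using cntN[OF theta_nz] by (simp add: cnt_def U_def)
  have cI: "cnt Linf = 1" using cntLinf[OF theta_nz] by (simp add: cnt_def U_def)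
  have cL: "cnt (L a b) = (if b / \<theta> \<in> Fq q then 1 else q + 1)" for a b
    using cntL[OF theta_nz hyp] by (simp add: cnt_def U_def)
  have q1: "q + 1 \<noteq> 1" using q_ge2 by simp
  have iu: "is_unital f q U"
    unfolding is_unital_def
  proof
    show "card U = q ^ 3 + 1" using cardU[OF theta_nz] by (simp add: U_def)
    show "\<forall>l. card {P \<in> U. inc f P l} = 1 \<or> card {P \<in> U. inc f P l} = q + 1"
    proof
      fix l show "card {P \<in> U. inc f P l} = 1 \<or> card {P \<in> U. inc f P l} = q + 1"
        using cN cI cL unfolding cnt_def by (cases l) auto
    qed
  qed
  have sec: "secant_lines f q U = {l. cnt l = q + 1}" by (simp add: secant_lines_def cnt_def)
  have tan: "tangent_lines f U = {l. cnt l = 1}" by (simp add: tangent_lines_def cnt_def)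
  define \<alpha> where "\<alpha> P = (case P of Aff x y \<Rightarrow> L x y | _ \<Rightarrow> Linf)" for P :: "'a point"
  define \<beta> where "\<beta> l = (case l of L a b \<Rightarrow> Aff a b | N a \<Rightarrow> Dir a | Linf \<Rightarrow> point.Inf)" for l :: "'a line"
  have mU: "Aff x y \<in> U \<longleftrightarrow> y / \<theta> \<in> Fq q" "point.Inf \<in> U" "Dir c \<notin> U" for x y c
    using memU[OF theta_nz] by (auto simp: U_def)
  have b1: "bij_betw \<alpha> U {l. cnt l = 1}"
    unfolding bij_betw_def
  proof
    show "inj_on \<alpha> U"
    proof (rule inj_onI)
      fix P Q assume "P \<in> U" "Q \<in> U" "\<alpha> P = \<alpha> Q"
      thus "P = Q" using mU by (cases P; cases Q) (auto simp: \<alpha>_def)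
    qed
    show "\<alpha> ` U = {l. cnt l = 1}"
    proof (rule Set.set_eqI)
      fix l show "l \<in> \<alpha> ` U \<longleftrightarrow> l \<in> {l. cnt l = 1}"
      proof (cases l)
        case (L a b)
        have "L a b \<in> \<alpha> ` U \<longleftrightarrow> Aff a b \<in> U"
        proof
          assume "L a b \<in> \<alpha> ` U"
          then obtain P where "P \<in> U" "L a b = \<alpha> P" by blast
          thus "Aff a b \<in> U" using mU by (cases P) (auto simp: \<alpha>_def)
        next
          assume "Aff a b \<in> U" thus "L a b \<in> \<alpha> ` U" by (force simp: \<alpha>_def)
        qed
        thus ?thesis using L cL q1 mU by auto
      next
        case (N a)
        have "N a \<notin> \<alpha> ` U" by (auto simp: \<alpha>_def split: point.splits)
        thus ?thesis using N cN q1 by auto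
      next
        case Linf
        have "Linf \<in> \<alpha> ` U" using mU(2) by (force simp: \<alpha>_def)
        thus ?thesis using Linf cI by auto
      qed
    qed
  qed
  have b2: "bij_betw \<beta> {l. cnt l = q + 1} (- U)"
    unfolding bij_betw_def
  proof
    show "inj_on \<beta> {l. cnt l = q + 1}"
    proof (rule inj_onI)
      fix l m assume "l \<in> {l. cnt l = q + 1}" "m \<in> {l. cnt l = q + 1}" "\<beta> l = \<beta> m"
      thus "l = m" using cI q1 by (cases l; cases m) (auto simp: \<beta>_def)
    qed
    show "\<beta> ` {l. cnt l = q + 1} = - U"
    proof (rule Set.set_eqI)
      fix P show "P \<in> \<beta> ` {l. cnt l = q + 1} \<longleftrightarrow> P \<in> - U"
      proof (cases P)
        case (Aff x y)
        have "Aff x y \<in> \<beta> ` {l. cnt l = q + 1} \<longleftrightarrow> L x y \<in> {l. cnt l = q + 1}"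
        proof
          assume "Aff x y \<in> \<beta> ` {l. cnt l = q + 1}"
          then obtain l where "l \<in> {l. cnt l = q + 1}" "Aff x y = \<beta> l" by blast
          thus "L x y \<in> {l. cnt l = q + 1}" by (cases l) (auto simp: \<beta>_def)
        next
          assume "L x y \<in> {l. cnt l = q + 1}" thus "Aff x y \<in> \<beta> ` {l. cnt l = q + 1}"
            by (force simp: \<beta>_def)
        qed
        thus ?thesis using Aff cL q1 mU by auto
      next
        case (Dir c)
        have "Dir c \<in> \<beta> ` {l. cnt l = q + 1}" using cN by (force simp: \<beta>_def)
        thus ?thesis using Dir mU by auto
      next
        case Inf
        have "point.Inf \<notin> \<beta> ` {l. cnt l = q + 1}" using cI q1 by (auto simp: \<beta>_def split: line.splits)
        thus ?thesis using \<open>P = point.Inf\<close> mU by auto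
      qed
    qed
  qed
  have incid: "\<forall>P\<in>U. \<forall>l\<in>{l. cnt l = q + 1}. inc f P l \<longleftrightarrow> inc f (\<beta> l) (\<alpha> P)"
  proof (intro ballI)
    fix P l assume "P \<in> U" "l \<in> {l. cnt l = q + 1}"
    thus "inc f P l \<longleftrightarrow> inc f (\<beta> l) (\<alpha> P)"
      using mU by (cases P; cases l) (auto simp: \<alpha>_def \<beta>_def add.commute)
  qed
  have "self_dual_unital f q U"
    unfolding self_dual_unital_def design_iso_def sec tan
    using b1 b2 incid by blast
  with iu show ?thesis by (simp add: U_def)
qed

end

theorem proposition3p4:
  fixes q :: nat and f :: "'a::{field,finite} \<Rightarrow> 'a" and \<xi> \<theta> :: 'a
  assumes q_pp: "\<exists>p k. prime p \<and> k > 0 \<and> q = p ^ k"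
    and q_odd: "odd q"
    and card_field: "CARD('a) = q ^ 2"
    and xi: "\<xi> \<notin> Fq q"
    and f_planar: "planar f"
    and theta_nz: "\<theta> \<noteq> 0"
    and hyp: "\<forall>c \<in> Fq q.
      card {x. comp1 q \<xi> \<theta> * comp0 q \<xi> (f x) - comp0 q \<xi> \<theta> * comp1 q \<xi> (f x) = c}
        = (if c \<noteq> 0 then q + 1 else 1)"
  shows "is_unital f q (U_theta q \<theta>) \<and> self_dual_unital f q (U_theta q \<theta>)"
proof -
  show ?thesis by (rule main[OF q_pp card_field xi theta_nz hyp])
qed

end
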